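(* Let $s\in(\frac12,1)$, $\Omega\subset\mathbb R^N$, and let $(u_n)$ be a sequence of subsolutions [resp. supersolutions] at non-zero gradient points in $\Omega$. Assume that $u_n$ converges uniformly to a function $u_0$, and that there exist $\alpha<2s$ and $C>0$ such that $|u_n(x)|\le C(1+|x|)^\alpha$ for all $n$ and all $x$. Then $u_0$ is a subsolution [resp. supersolution] at non-zero gradient points in $\Omega$.
   Context: $S^{N-1}$ unit sphere. $\phi\in C^{1,1}(x_0)$ means there are $p\in\mathbb R^N$, $M,\eta_0>0$ with $|\phi(x_0+x)-\phi(x_0)-p\cdot x|\le M|x|^2$ for $|x|<\eta_0$; $\nabla\phi(x_0):=p$. For such $\phi$ with $\nabla\phi(x)\ne0$ and $v=\nabla\phi(x)/|\nabla\phi(x)|$, the infinity fractional Laplacian is $\Delta^s_\infty\phi(x)=\int_0^\infty\frac{\phi(x+\eta v)+\phi(x-\eta v)-2\phi(x)}{\eta^{1+2s}}d\eta$. An upper [lower] semicontinuous $u:\mathbb R^N\to\mathbb R$ is a subsolution [supersolution] at non-zero gradient points in $\Omega$ if for every $x_0\in\Omega$, whenever $r>0$, $\phi\in C^{1,1}(x_0)\cap C(\overline{B_r(x_0)})$ with $\nabla\phi(x_0)\ne0$, $\phi(x_0)=u(x_0)$ and $\phi>u$ [$\phi<u$] on $B_r(x_0)\setminus\{x_0\}$, the function $\tilde u$ equal to $\phi$ on $B_r(x_0)$ and to $u$ elsewhere satisfies $\Delta^s_\infty\tilde u(x_0)\ge0$ [$\le0$]. *)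

theory Defs
  imports "HOL-Analysis.Analysis"
begin

definition usc :: "('a::euclidean_space \<Rightarrow> real) \<Rightarrow> bool" where
  "usc u \<longleftrightarrow> (\<forall>x t. u x < t \<longrightarrow> (\<forall>\<^sub>F y in at x. u y < t))"

definition lsc :: "('a::euclidean_space \<Rightarrow> real) \<Rightarrow> bool" where
  "lsc u \<longleftrightarrow> (\<forall>x t. t < u x \<longrightarrow> (\<forall>\<^sub>F y in at x. t < u y))"

definition C11_at :: "('a::euclidean_space \<Rightarrow> real) \<Rightarrow> 'a \<Rightarrow> 'a \<Rightarrow> bool" where
  "C11_at \<phi> x0 p \<longleftrightarrow> (\<exists>M \<eta>0. M > 0 \<and> \<eta>0 > 0 \<and>
      (\<forall>x. norm x < \<eta>0 \<longrightarrow> \<bar>\<phi> (x0 + x) - \<phi> x0 - p \<bullet> x\<bar> \<le> M * (norm x)\<^sup>2))"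

definition frac_integrand :: "real \<Rightarrow> ('a::euclidean_space \<Rightarrow> real) \<Rightarrow> 'a \<Rightarrow> 'a \<Rightarrow> real \<Rightarrow> real" where
  "frac_integrand s w x v \<eta> = (w (x + \<eta> *\<^sub>R v) + w (x - \<eta> *\<^sub>R v) - 2 * w x) / \<eta> powr (1 + 2 * s)"

definition fraclap_pos :: "real \<Rightarrow> ('a::euclidean_space \<Rightarrow> real) \<Rightarrow> 'a \<Rightarrow> 'a \<Rightarrow> ennreal" where
  "fraclap_pos s w x v = (\<integral>\<^sup>+ \<eta>\<in>{0<..}. ennreal (frac_integrand s w x v \<eta>) \<partial>lborel)"

definition fraclap_neg :: "real \<Rightarrow> ('a::euclidean_space \<Rightarrow> real) \<Rightarrow> 'a \<Rightarrow> 'a \<Rightarrow> ennreal" where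
  "fraclap_neg s w x v = (\<integral>\<^sup>+ \<eta>\<in>{0<..}. ennreal (- frac_integrand s w x v \<eta>) \<partial>lborel)"

(* "\<Delta>^s_\<infinity> w(x) \<ge> 0" with v = \<nabla>phi(x)/|\<nabla>phi(x)|: the integral is well defined in
   [-\<infinity>,+\<infinity>] (negative part finite) and nonnegative. *)
definition fraclap_ge0 :: "real \<Rightarrow> ('a::euclidean_space \<Rightarrow> real) \<Rightarrow> 'a \<Rightarrow> 'a \<Rightarrow> bool" where
  "fraclap_ge0 s w x v \<longleftrightarrow> fraclap_neg s w x v < \<infinity> \<and> fraclap_neg s w x v \<le> fraclap_pos s w x v"

definition fraclap_le0 :: "real \<Rightarrow> ('a::euclidean_space \<Rightarrow> real) \<Rightarrow> 'a \<Rightarrow> 'a \<Rightarrow> bool" where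
  "fraclap_le0 s w x v \<longleftrightarrow> fraclap_pos s w x v < \<infinity> \<and> fraclap_pos s w x v \<le> fraclap_neg s w x v"

definition subsol_nzg :: "real \<Rightarrow> 'a::euclidean_space set \<Rightarrow> ('a \<Rightarrow> real) \<Rightarrow> bool" where
  "subsol_nzg s \<Omega> u \<longleftrightarrow> usc u \<and>
     (\<forall>x0\<in>\<Omega>. \<forall>r \<phi> p. r > 0 \<and> C11_at \<phi> x0 p \<and> continuous_on (cball x0 r) \<phi> \<and> p \<noteq> 0
        \<and> \<phi> x0 = u x0 \<and> (\<forall>x\<in>ball x0 r - {x0}. \<phi> x > u x)
        \<longrightarrow> fraclap_ge0 s (\<lambda>x. if x \<in> ball x0 r then \<phi> x else u x) x0 (p /\<^sub>R norm p))"

definition supersol_nzg :: "real \<Rightarrow> 'a::euclidean_space set \<Rightarrow> ('a \<Rightarrow> real) \<Rightarrow> bool" where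
  "supersol_nzg s \<Omega> u \<longleftrightarrow> lsc u \<and>
     (\<forall>x0\<in>\<Omega>. \<forall>r \<phi> p. r > 0 \<and> C11_at \<phi> x0 p \<and> continuous_on (cball x0 r) \<phi> \<and> p \<noteq> 0
        \<and> \<phi> x0 = u x0 \<and> (\<forall>x\<in>ball x0 r - {x0}. \<phi> x < u x)
        \<longrightarrow> fraclap_le0 s (\<lambda>x. if x \<in> ball x0 r then \<phi> x else u x) x0 (p /\<^sub>R norm p))"

end

theory Submission
  imports Defs
begin


lemma fatou_chain:
  fixes F :: "nat \<Rightarrow> real \<Rightarrow> real" and G H :: "real \<Rightarrow> real"
  assumes meas: "\<And>n. F n \<in> borel_measurable borel"
    and measH: "H \<in> borel_measurable borel"
    and finH: "(\<integral>\<^sup>+ \<eta>\<in>{0<..}. ennreal (H \<eta>) \<partial>lborel) < \<infinity>"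
    and dom: "\<And>n \<eta>. \<eta> > 0 \<Longrightarrow> F n \<eta> \<le> H \<eta>"
    and ptw: "\<And>\<eta> e. \<eta> > 0 \<Longrightarrow> e > 0 \<Longrightarrow> eventually (\<lambda>n. F n \<eta> < G \<eta> + e) sequentially"
    and each: "\<And>n. (\<integral>\<^sup>+ \<eta>\<in>{0<..}. ennreal (- F n \<eta>) \<partial>lborel) \<le> (\<integral>\<^sup>+ \<eta>\<in>{0<..}. ennreal (F n \<eta>) \<partial>lborel)"
  shows "(\<integral>\<^sup>+ \<eta>\<in>{0<..}. ennreal (- G \<eta>) \<partial>lborel) < \<infinity> \<and>
         (\<integral>\<^sup>+ \<eta>\<in>{0<..}. ennreal (- G \<eta>) \<partial>lborel) \<le> (\<integral>\<^sup>+ \<eta>\<in>{0<..}. ennreal (G \<eta>) \<partial>lborel)"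
proof -
  define P where "P n = (\<integral>\<^sup>+ \<eta>\<in>{0<..}. ennreal (F n \<eta>) \<partial>lborel)" for n
  define Q where "Q n = (\<integral>\<^sup>+ \<eta>\<in>{0<..}. ennreal (- F n \<eta>) \<partial>lborel)" for n
  have m1: "(\<lambda>\<eta>. ennreal (- F n \<eta>) * indicator {0<..} \<eta>) \<in> borel_measurable lborel" for n
    using meas[of n] by measurable
  have m2: "(\<lambda>\<eta>. ennreal (F n \<eta>) * indicator {0<..} \<eta>) \<in> borel_measurable lborel" for n
    using meas[of n] by measurable
  have m3: "(\<lambda>\<eta>. ennreal (H \<eta>) * indicator {0<..} \<eta>) \<in> borel_measurable lborel"
    using measH by measurable
  have liminf_pt: "ennreal (- G \<eta>) * indicator {0<..} \<eta> \<le> liminf (\<lambda>n. ennreal (- F n \<eta>) * indicator {0<..} \<eta>)" for \<eta>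
  proof (cases "\<eta> > 0")
    case False then show ?thesis by simp
  next
    case True
    show ?thesis
      unfolding le_Liminf_iff
    proof (intro allI impI)
      fix y assume y: "y < ennreal (- G \<eta>) * indicator {0<..} \<eta>"
      then have y': "y < ennreal (- G \<eta>)" using True by simp
      then obtain y0 where y0: "y = ennreal y0" "0 \<le> y0" "y0 < - G \<eta>"
        by (metis ennreal_cases ennreal_less_iff ennreal_less_top ennreal_neg infinity_ennreal_def leI not_less_iff_gr_or_eq top.extremum_strict)
      have "eventually (\<lambda>n. F n \<eta> < G \<eta> + (- G \<eta> - y0)) sequentially"
        using ptw[OF True, of "- G \<eta> - y0"] y0 by simp
      then show "eventually (\<lambda>n. y < ennreal (- F n \<eta>) * indicator {0<..} \<eta>) sequentially"
        by eventually_elim (use True y0 in \<open>auto intro!: ennreal_lessI\<close>)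
    qed
  qed
  have limsup_pt: "limsup (\<lambda>n. ennreal (F n \<eta>) * indicator {0<..} \<eta>) \<le> ennreal (G \<eta>) * indicator {0<..} \<eta>" for \<eta>
  proof (cases "\<eta> > 0")
    case False then show ?thesis by (simp add: Limsup_const)
  next
    case True
    show ?thesis
      unfolding Limsup_le_iff
    proof (intro allI impI)
      fix y assume y: "ennreal (G \<eta>) * indicator {0<..} \<eta> < y"
      then have y': "ennreal (G \<eta>) < y" using True by simp
      show "eventually (\<lambda>n. ennreal (F n \<eta>) * indicator {0<..} \<eta> < y) sequentially"
      proof (cases "y = \<infinity>")
        case True then show ?thesis by (simp add: indicator_def ennreal_less_top)
      next
        case False
        then obtain y0 where y0: "y = ennreal y0" "0 \<le> y0"
          by (metis ennreal_cases infinity_ennreal_def)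
        have "0 < y0" using y' y0
          by (metis ennreal_less_zero_iff not_less_iff_gr_or_eq leD zero_le)
        have "G \<eta> < y0"
        proof (cases "G \<eta> \<ge> 0")
          case True then show ?thesis using y' y0 by (simp add: ennreal_less_iff)
        next
          case False then show ?thesis using \<open>0 < y0\<close> by simp
        qed
        note this \<open>0 < y0\<close>
        then have "eventually (\<lambda>n. F n \<eta> < G \<eta> + (y0 - G \<eta>)) sequentially"
          using ptw[OF \<open>\<eta>>0\<close>, of "y0 - G \<eta>"] by simp
        then show ?thesis
          by eventually_elim (use \<open>\<eta>>0\<close> y0 \<open>0<y0\<close> in \<open>auto intro!: ennreal_lessI\<close>)
      qed
    qed
  qed
  have "(\<integral>\<^sup>+ \<eta>\<in>{0<..}. ennreal (- G \<eta>) \<partial>lborel) \<le> (\<integral>\<^sup>+ \<eta>. liminf (\<lambda>n. ennreal (- F n \<eta>) * indicator {0<..} \<eta>) \<partial>lborel)"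
    by (intro nn_integral_mono liminf_pt)
  also have "\<dots> \<le> liminf Q"
    unfolding Q_def by (intro nn_integral_liminf m1)
  also have "\<dots> \<le> liminf P"
    by (intro Liminf_mono) (auto simp: Q_def P_def each)
  finally have A: "(\<integral>\<^sup>+ \<eta>\<in>{0<..}. ennreal (- G \<eta>) \<partial>lborel) \<le> liminf P" .
  have "liminf P \<le> limsup P"
    by (intro Liminf_le_Limsup sequentially_bot)
  also have "limsup P \<le> (\<integral>\<^sup>+ \<eta>. limsup (\<lambda>n. ennreal (F n \<eta>) * indicator {0<..} \<eta>) \<partial>lborel)"
    unfolding P_def
    by (rule nn_integral_limsup[OF m2 m3 _ finH])
       (auto intro!: AE_I2 mult_right_mono ennreal_leI dom simp: indicator_def)
  also have "\<dots> \<le> (\<integral>\<^sup>+ \<eta>\<in>{0<..}. ennreal (G \<eta>) \<partial>lborel)"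
    by (intro nn_integral_mono limsup_pt)
  finally have B: "liminf P \<le> (\<integral>\<^sup>+ \<eta>\<in>{0<..}. ennreal (G \<eta>) \<partial>lborel)" .
  have "limsup P \<le> (\<integral>\<^sup>+ \<eta>\<in>{0<..}. ennreal (H \<eta>) \<partial>lborel)"
    unfolding P_def
    by (intro Limsup_bounded always_eventually allI nn_integral_mono)
       (auto intro!: mult_right_mono ennreal_leI dom simp: indicator_def)
  then have "liminf P < \<infinity>"
    using finH Liminf_le_Limsup[OF sequentially_bot, of P] by (meson order.strict_trans1)
  with A B show ?thesis by (meson order.strict_trans1 order.trans)
qed



lemma pow_int_fin:
  fixes a b c A B :: real
  assumes "a > -1" "b < -1" "c > 0" "A \<ge> 0" "B \<ge> 0"
  shows "(\<integral>\<^sup>+ \<eta>\<in>{0<..}. ennreal (A * \<eta> powr a * indicator {0..c} \<eta> + B * \<eta> powr b * indicator {c..} \<eta>) \<partial>lborel) < \<infinity>"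
proof -
  have I1: "((\<lambda>x. A * x powr a) has_integral (A * (c powr (a+1) / (a+1)))) {0..c}"
    using has_integral_powr_from_0[of a c] assms by (intro has_integral_mult_right) auto
  have I2: "((\<lambda>x. B * x powr b) has_integral (B * (-(c powr (b+1)) / (b+1)))) {c..}"
    using has_integral_powr_to_inf[of b c] assms by (intro has_integral_mult_right) auto
  have E1: "(\<integral>\<^sup>+ x. indicator {0..c} x * (A * x powr a) \<partial>lborel) = A * (c powr (a+1) / (a+1))"
    by (rule nn_integral_has_integral_lebesgue[OF _ I1]) (use assms in auto)
  have E2: "(\<integral>\<^sup>+ x. indicator {c..} x * (B * x powr b) \<partial>lborel) = B * (-(c powr (b+1)) / (b+1))"
    by (rule nn_integral_has_integral_lebesgue[OF _ I2]) (use assms in auto)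
  have "(\<integral>\<^sup>+ \<eta>\<in>{0<..}. ennreal (A * \<eta> powr a * indicator {0..c} \<eta> + B * \<eta> powr b * indicator {c..} \<eta>) \<partial>lborel)
      \<le> (\<integral>\<^sup>+ x. (ennreal (indicator {0..c} x * (A * x powr a)) + ennreal (indicator {c..} x * (B * x powr b))) \<partial>lborel)"
  proof (intro nn_integral_mono)
    fix x :: real
    have n1: "0 \<le> indicator {0..c} x * (A * x powr a)" and n2: "0 \<le> indicator {c..} x * (B * x powr b)"
      using assms by (auto simp: indicator_def)
    have "ennreal (A * x powr a * indicator {0..c} x + B * x powr b * indicator {c..} x) * indicator {0<..} x
       \<le> ennreal (A * x powr a * indicator {0..c} x + B * x powr b * indicator {c..} x)"
      by (simp add: indicator_def)
    also have "\<dots> = ennreal (indicator {0..c} x * (A * x powr a)) + ennreal (indicator {c..} x * (B * x powr b))"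
      using ennreal_plus[OF n1 n2] by (simp add: mult.commute)
    finally show "ennreal (A * x powr a * indicator {0..c} x + B * x powr b * indicator {c..} x) * indicator {0<..} x
       \<le> ennreal (indicator {0..c} x * (A * x powr a)) + ennreal (indicator {c..} x * (B * x powr b))" .
  qed
  also have "\<dots> = (\<integral>\<^sup>+ x. indicator {0..c} x * (A * x powr a) \<partial>lborel) + (\<integral>\<^sup>+ x. indicator {c..} x * (B * x powr b) \<partial>lborel)"
    by (intro nn_integral_add) auto
  also have "\<dots> < \<infinity>" unfolding E1 E2 by simp
  finally show ?thesis .
qed

lemma usc_open: "usc f \<Longrightarrow> open {x. f x < t}"
  unfolding usc_def open_subopen[of "{x. f x < t}"]
proof (intro ballI)
  fix x assume u: "\<forall>x t. f x < t \<longrightarrow> (\<forall>\<^sub>F y in at x. f y < t)" and x: "x \<in> {x. f x < t}"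
  then have "\<forall>\<^sub>F y in at x. f y < t" by auto
  then obtain S where "open S" "x \<in> S" "\<forall>y\<in>S. y \<noteq> x \<longrightarrow> f y < t"
    unfolding eventually_at_topological by blast
  then show "\<exists>T. open T \<and> x \<in> T \<and> T \<subseteq> {x. f x < t}" using x by (intro exI[of _ S]) auto
qed

lemma usc_measurable: "usc f \<Longrightarrow> f \<in> borel_measurable borel"
  unfolding borel_measurable_iff_less by (auto intro!: borel_open usc_open)

lemma usc_eventually_nhds: "usc f \<Longrightarrow> e > 0 \<Longrightarrow> \<forall>\<^sub>F y in nhds x. f y < f x + e"
proof -
  assume u: "usc f" and e: "e > 0"
  then have "\<forall>\<^sub>F y in at x. f y < f x + e" unfolding usc_def by auto
  then obtain S where S: "open S" "x \<in> S" "\<forall>y\<in>S. y \<noteq> x \<longrightarrow> f y < f x + e"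
    unfolding eventually_at_topological by blast
  have "\<forall>y\<in>S. f y < f x + e" using S(3) e by auto
  then show ?thesis unfolding eventually_nhds using S(1,2) by blast
qed

lemma usc_seq:
  assumes "usc f" "(X \<longlongrightarrow> a) F" "e > 0"
  shows "\<forall>\<^sub>F n in F. f (X n) < f a + e"
  using eventually_compose_filterlim[OF usc_eventually_nhds[OF assms(1,3), of a] assms(2)] .

lemma usc_minus_cont:
  assumes "usc f" "continuous_on UNIV g"
  shows "usc (\<lambda>x. f x - g x)"
  unfolding usc_def
proof (intro allI impI)
  fix x t assume "f x - g x < t"
  define d where "d = t - (f x - g x)"
  have d: "d > 0" using \<open>f x - g x < t\<close> by (simp add: d_def)
  have "\<forall>\<^sub>F y in at x. f y < f x + d/2"
    using assms(1) d unfolding usc_def by auto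
  moreover have "(g \<longlongrightarrow> g x) (at x)"
    using assms(2) by (simp add: continuous_on_def)
  then have "\<forall>\<^sub>F y in at x. \<bar>g y - g x\<bar> < d/2"
    using d unfolding tendsto_iff dist_real_def by (metis half_gt_zero)
  then have "\<forall>\<^sub>F y in at x. g y > g x - d/2"
    by (rule eventually_mono) arith
  ultimately show "\<forall>\<^sub>F y in at x. f y - g y < t"
    by eventually_elim (use d_def in linarith)
qed

lemma usc_max:
  assumes "usc f" "compact K" "K \<noteq> {}"
  shows "\<exists>x\<in>K. \<forall>y\<in>K. f y \<le> f x"
proof (rule ccontr)
  assume "\<not> ?thesis"
  then have cov: "K \<subseteq> (\<Union>y\<in>K. {x. f x < f y})" by (auto simp: not_le)
  obtain D where D: "D \<subseteq> K" "finite D" "K \<subseteq> (\<Union>y\<in>D. {x. f x < f y})"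
  proof (rule compactE_image[OF assms(2), of K "\<lambda>y. {x. f x < f y}"])
    show "open {x. f x < f y}" for y by (rule usc_open[OF assms(1)])
    show "K \<subseteq> (\<Union>y\<in>K. {x. f x < f y})" by (rule cov)
  qed
  have "D \<noteq> {}"
  proof
    assume "D = {}"
    with D(3) have "K = {}" by simp
    with assms(3) show False by simp
  qed
  obtain z where z0: "z \<in> D" "f z = Max (f ` D)"
  proof -
    have "Max (f ` D) \<in> f ` D" using \<open>finite D\<close> \<open>D \<noteq> {}\<close> by (intro Max_in) auto
    then obtain w where w: "Max (f ` D) = f w" "w \<in> D" by (rule imageE)
    show ?thesis by (rule that[OF w(2) w(1)[symmetric]])
  qed
  have z: "z \<in> D" "\<forall>y\<in>D. f y \<le> f z"
    using z0 Max_ge[OF finite_imageI[OF \<open>finite D\<close>]] by auto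
  have "z \<in> K" using D(1) z(1) by blast
  then obtain y where "y \<in> D" "f z < f y" using D(3) by blast
  with z show False by (meson not_le)
qed



lemma frac_neg: "frac_integrand s (\<lambda>y. - w y) x (-v) \<eta> = - frac_integrand s w x v \<eta>"
  unfolding frac_integrand_def by (simp add: algebra_simps minus_divide_left[symmetric] diff_divide_distrib)

lemma le0_iff: "fraclap_le0 s w x v \<longleftrightarrow> fraclap_ge0 s (\<lambda>y. - w y) x (-v)"
  unfolding fraclap_le0_def fraclap_ge0_def fraclap_pos_def fraclap_neg_def frac_neg by simp

lemma C11_neg: "C11_at (\<lambda>x. - \<phi> x) x0 (-p) \<longleftrightarrow> C11_at \<phi> x0 p"
proof -
  have "\<bar>- \<phi> (x0 + x) - - \<phi> x0 - (-p) \<bullet> x\<bar> = \<bar>\<phi> (x0 + x) - \<phi> x0 - p \<bullet> x\<bar>" for x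
    by (simp add: abs_minus_commute algebra_simps inner_minus_left)
  then show ?thesis unfolding C11_at_def by simp
qed

lemma lsc_usc: "lsc u \<longleftrightarrow> usc (\<lambda>x. - u x)"
  unfolding lsc_def usc_def
proof (intro iffI allI impI)
  fix x t assume A: "\<forall>x t. t < u x \<longrightarrow> (\<forall>\<^sub>F y in at x. t < u y)" and "- u x < t"
  then have "\<forall>\<^sub>F y in at x. -t < u y" by auto
  then show "\<forall>\<^sub>F y in at x. - u y < t" by (rule eventually_mono) auto
next
  fix x t assume A: "\<forall>x t. - u x < t \<longrightarrow> (\<forall>\<^sub>F y in at x. - u y < t)" and "t < u x"
  have "- u x < -t" using \<open>t < u x\<close> by simp
  then have "\<forall>\<^sub>F y in at x. - u y < -t" using A by blast
  then show "\<forall>\<^sub>F y in at x. t < u y" by (rule eventually_mono) auto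
qed

lemma super_iff: "supersol_nzg s \<Omega> u \<longleftrightarrow> subsol_nzg s \<Omega> (\<lambda>x. - u x)"
proof -
  have eq1: "(\<lambda>y. - (if y \<in> B then - \<phi> y else u y)) = (\<lambda>y. if y \<in> B then \<phi> y else - u y)" for B \<phi>
    by auto
  have eq2: "- ((- p) /\<^sub>R norm (- p)) = p /\<^sub>R norm p" for p :: 'a by simp
  have eq3: "(\<lambda>y. - (if y \<in> B then \<phi> y else u y)) = (\<lambda>y. if y \<in> B then - \<phi> y else - u y)" for B \<phi>
    by auto
  show ?thesis
    unfolding supersol_nzg_def subsol_nzg_def lsc_usc
  proof (intro iffI conjI ballI allI impI; elim conjE)
    fix x0 r \<phi> p
    assume H: "\<forall>x0\<in>\<Omega>. \<forall>r \<phi> p. 0 < r \<and> C11_at \<phi> x0 p \<and> continuous_on (cball x0 r) \<phi> \<and> p \<noteq> 0 \<and> \<phi> x0 = u x0 \<and>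
           (\<forall>x\<in>ball x0 r - {x0}. \<phi> x < u x) \<longrightarrow>
           fraclap_le0 s (\<lambda>x. if x \<in> ball x0 r then \<phi> x else u x) x0 (p /\<^sub>R norm p)"
      and x0: "x0 \<in> \<Omega>" and c: "0 < r" "C11_at \<phi> x0 p" "continuous_on (cball x0 r) \<phi>" "p \<noteq> 0"
        "\<phi> x0 = - u x0" "\<forall>x\<in>ball x0 r - {x0}. - u x < \<phi> x"
    have "fraclap_le0 s (\<lambda>x. if x \<in> ball x0 r then - \<phi> x else u x) x0 ((-p) /\<^sub>R norm (-p))"
      by (rule H[rule_format, OF x0]) (use c in \<open>auto simp: C11_neg intro!: continuous_on_minus; force\<close>)
    then show "fraclap_ge0 s (\<lambda>x. if x \<in> ball x0 r then \<phi> x else - u x) x0 (p /\<^sub>R norm p)"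
      unfolding le0_iff eq1 eq2 .
  next
    fix x0 r \<phi> p
    assume H: "\<forall>x0\<in>\<Omega>. \<forall>r \<phi> p. 0 < r \<and> C11_at \<phi> x0 p \<and> continuous_on (cball x0 r) \<phi> \<and> p \<noteq> 0 \<and> \<phi> x0 = - u x0 \<and>
           (\<forall>x\<in>ball x0 r - {x0}. - u x < \<phi> x) \<longrightarrow>
           fraclap_ge0 s (\<lambda>x. if x \<in> ball x0 r then \<phi> x else - u x) x0 (p /\<^sub>R norm p)"
      and x0: "x0 \<in> \<Omega>" and c: "0 < r" "C11_at \<phi> x0 p" "continuous_on (cball x0 r) \<phi>" "p \<noteq> 0"
        "\<phi> x0 = u x0" "\<forall>x\<in>ball x0 r - {x0}. \<phi> x < u x"
    have "fraclap_ge0 s (\<lambda>x. if x \<in> ball x0 r then - \<phi> x else - u x) x0 ((-p) /\<^sub>R norm (-p))"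
      by (rule H[rule_format, OF x0]) (use c in \<open>auto simp: C11_neg intro!: continuous_on_minus; force\<close>)
    then show "fraclap_le0 s (\<lambda>x. if x \<in> ball x0 r then \<phi> x else u x) x0 (p /\<^sub>R norm p)"
      unfolding le0_iff eq3 by simp
  qed
qed



lemma quad_id: "(norm (a + h))\<^sup>2 - (norm a)\<^sup>2 = 2 * (a \<bullet> h) + (norm (h::'a::real_inner))\<^sup>2"
  by (simp add: power2_norm_eq_inner inner_add_left inner_add_right inner_commute)

lemma div_lt:
  fixes A B e q :: real
  assumes "q > 0" "A < B + e * q"
  shows "A / q < B / q + e"
proof -
  have "A / q < (B + e * q) / q" by (rule divide_strict_right_mono) (use assms in auto)
  also have "\<dots> = B / q + e" using assms(1) by (simp add: add_divide_distrib)
  finally show ?thesis .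
qed

lemma sub_main:
  fixes s :: real and \<Omega> :: "'a::euclidean_space set"
    and u :: "nat \<Rightarrow> 'a \<Rightarrow> real" and u0 :: "'a \<Rightarrow> real"
  assumes s: "1/2 < s" "s < 1" and \<Omega>: "open \<Omega>"
    and ul: "uniform_limit UNIV u u0 sequentially"
    and \<alpha>: "\<alpha> < 2 * s" "C > 0" "\<And>n x. \<bar>u n x\<bar> \<le> C * (1 + norm x) powr \<alpha>"
    and sub: "\<And>n. subsol_nzg s \<Omega> (u n)"
  shows "subsol_nzg s \<Omega> u0"
proof -
  have unif: "\<forall>\<^sub>F n in sequentially. \<forall>y. \<bar>u n y - u0 y\<bar> < e" if "e > 0" for e
    using ul that unfolding uniform_limit_iff dist_real_def by auto
  have uscn: "usc (u n)" for n using sub[of n] unfolding subsol_nzg_def by auto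
  have usc0: "usc u0"
    unfolding usc_def
  proof (intro allI impI)
    fix x t assume "u0 x < t"
    define d where "d = t - u0 x"
    have d: "d > 0" using \<open>u0 x < t\<close> d_def by simp
    obtain n where n: "\<forall>y. \<bar>u n y - u0 y\<bar> < d/3"
      using eventually_happens[OF unif[of "d/3"]] d by auto
    have "\<forall>\<^sub>F y in at x. u n y < u n x + d/3"
      using uscn[of n] d unfolding usc_def by auto
    then show "\<forall>\<^sub>F y in at x. u0 y < t"
    proof (rule eventually_mono)
      fix y assume "u n y < u n x + d/3"
      moreover have "\<bar>u n y - u0 y\<bar> < d/3" "\<bar>u n x - u0 x\<bar> < d/3" using n by auto
      ultimately show "u0 y < t" using d_def by linarith
    qed
  qed
  show ?thesis
    unfolding subsol_nzg_def
  proof (intro conjI usc0 ballI allI impI; elim conjE)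
    fix x0 r \<phi> p
    assume x0: "x0 \<in> \<Omega>" and r: "0 < r" and C11: "C11_at \<phi> x0 p" and phic: "continuous_on (cball x0 r) \<phi>"
      and p: "p \<noteq> 0" and phix0: "\<phi> x0 = u0 x0" and phigt: "\<forall>x\<in>ball x0 r - {x0}. u0 x < \<phi> x"
    obtain M \<eta>0 where M: "M > 0" "\<eta>0 > 0"
      and Mb: "\<And>h. norm h < \<eta>0 \<Longrightarrow> \<bar>\<phi> (x0 + h) - \<phi> x0 - p \<bullet> h\<bar> \<le> M * (norm h)\<^sup>2"
      using C11 unfolding C11_at_def by blast
    obtain \<rho>0 where \<rho>0: "\<rho>0 > 0" "cball x0 \<rho>0 \<subseteq> \<Omega>"
      using open_contains_cball \<Omega> x0 by blast
    define \<rho> where "\<rho> = min \<rho>0 (min r \<eta>0) / 2"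
    have \<rho>: "\<rho> > 0" "\<rho> < r" "\<rho> < \<eta>0" "cball x0 \<rho> \<subseteq> \<Omega>"
      using \<rho>0 r M unfolding \<rho>_def by auto
    define \<psi> where "\<psi> x = u0 x0 + p \<bullet> (x - x0) + (M+1) * (norm (x - x0))\<^sup>2" for x
    have \<psi>c: "continuous_on UNIV \<psi>" unfolding \<psi>_def by (intro continuous_intros)
    have \<psi>x0: "\<psi> x0 = u0 x0" by (simp add: \<psi>_def)
    have F1: "u0 x \<le> \<psi> x - (norm (x - x0))\<^sup>2" if "x \<in> cball x0 \<rho>" for x
    proof -
      have "u0 x \<le> \<phi> x"
      proof (cases "x = x0")
        case True then show ?thesis using phix0 by simp
      next
        case False
        then have "x \<in> ball x0 r - {x0}" using that \<rho> by auto
        then show ?thesis using phigt by force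
      qed
      moreover have "norm (x - x0) < \<eta>0" using that \<rho> by (auto simp: dist_norm norm_minus_commute)
      then have "\<bar>\<phi> (x0 + (x - x0)) - \<phi> x0 - p \<bullet> (x - x0)\<bar> \<le> M * (norm (x - x0))\<^sup>2" by (rule Mb)
      then have "\<phi> x \<le> \<phi> x0 + p \<bullet> (x - x0) + M * (norm (x - x0))\<^sup>2" by simp
      ultimately show ?thesis unfolding \<psi>_def using phix0 by (simp add: algebra_simps)
    qed
    have "\<exists>xn\<in>cball x0 \<rho>. \<forall>y\<in>cball x0 \<rho>. u n y - \<psi> y \<le> u n xn - \<psi> xn" for n
      using usc_max[OF usc_minus_cont[OF uscn \<psi>c], of "cball x0 \<rho>"] \<rho> by auto
    then obtain X where X: "\<And>n. X n \<in> cball x0 \<rho>"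
      and Xmax: "\<And>n y. y \<in> cball x0 \<rho> \<Longrightarrow> u n y - \<psi> y \<le> u n (X n) - \<psi> (X n)"
      by metis
    have keyd: "(norm (X n - x0))\<^sup>2 < 2 * d \<and> u n (X n) > \<psi> (X n) - d"
      if "\<forall>y. \<bar>u n y - u0 y\<bar> < d" for n d
    proof -
      have A: "u n (X n) - \<psi> (X n) \<ge> u n x0 - u0 x0"
        using Xmax[of x0 n] \<rho> \<psi>x0 by simp
      have a1: "\<bar>u n x0 - u0 x0\<bar> < d" "\<bar>u n (X n) - u0 (X n)\<bar> < d" using that by blast+
      then have "u n x0 - u0 x0 > - d" by linarith
      have "u n (X n) < u0 (X n) + d" using a1 by linarith
      moreover have "u0 (X n) \<le> \<psi> (X n) - (norm (X n - x0))\<^sup>2" using F1 X by blast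
      ultimately show ?thesis using A \<open>u n x0 - u0 x0 > - d\<close> by linarith
    qed
    have Xlim: "X \<longlonglongrightarrow> x0"
      unfolding tendsto_iff
    proof (intro allI impI)
      fix e :: real assume e: "e > 0"
      show "\<forall>\<^sub>F n in sequentially. dist (X n) x0 < e"
        using unif[of "e^2/2"] e
      proof -
        have "\<forall>\<^sub>F n in sequentially. \<forall>y. \<bar>u n y - u0 y\<bar> < e^2/2" using unif[of "e^2/2"] e by simp
        then show ?thesis
        proof (rule eventually_mono)
        fix n assume "\<forall>y. \<bar>u n y - u0 y\<bar> < e^2/2"
        then have "(norm (X n - x0))\<^sup>2 < e^2" using keyd by fastforce
        then show "dist (X n) x0 < e" using e by (simp add: dist_norm power_less_imp_less_base)
      qed
      qed
    qed
    have uX: "\<forall>\<^sub>F n in sequentially. u n (X n) > u0 x0 - e" if e: "e > 0" for e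
    proof -
      have "(\<lambda>n. \<psi> (X n)) \<longlonglongrightarrow> \<psi> x0"
        using \<psi>c Xlim by (metis UNIV_I continuous_on_def continuous_on_tendsto_compose eventually_sequentially)
      then have "\<forall>\<^sub>F n in sequentially. \<psi> (X n) > u0 x0 - e/2"
        using e \<psi>x0 by (intro order_tendstoD(1)) auto
      moreover have "\<forall>\<^sub>F n in sequentially. \<forall>y. \<bar>u n y - u0 y\<bar> < e/2" by (rule unif) (use e in simp)
      ultimately show ?thesis
      proof eventually_elim
        case (elim n)
        then have "\<psi> (X n) - e / 2 < u n (X n)" using keyd[of n "e/2"] by blast
        then show ?case using elim by linarith
      qed
    qed
    define pn where "pn n = p + (2 * (M+1)) *\<^sub>R (X n - x0)" for n
    have pnlim: "pn \<longlonglongrightarrow> p"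
      unfolding pn_def using Xlim by (auto intro!: tendsto_eq_intros)
    define v where "v = p /\<^sub>R norm p"
    define vn where "vn n = pn n /\<^sub>R norm (pn n)" for n
    have vnlim: "vn \<longlonglongrightarrow> v"
      unfolding vn_def v_def using pnlim p by (auto intro!: tendsto_eq_intros)
    have "\<forall>\<^sub>F n in sequentially. pn n \<noteq> 0 \<and> dist (X n) x0 < \<rho>/2"
      using tendsto_imp_eventually_ne[OF pnlim p] Xlim[unfolded tendsto_iff, rule_format, of "\<rho>/2"] \<rho>
      by (auto intro: eventually_conj)
    then obtain N where N: "\<And>n. n \<ge> N \<Longrightarrow> pn n \<noteq> 0 \<and> dist (X n) x0 < \<rho>/2"
      unfolding eventually_sequentially by blast
    define tn where "tn n = min (\<rho>/2) (1 / real (Suc n))" for n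
    have tn: "0 < tn n" "tn n \<le> \<rho>/2" for n using \<rho> by (auto simp: tn_def)
    define c where "c n = u n (X n) - \<psi> (X n)" for n
    define \<Psi> where "\<Psi> n y = \<psi> y + (norm (y - X n))\<^sup>2 + c n" for n y
    define W where "W n y = (if y \<in> ball (X n) (tn n) then \<Psi> n y else u n y)" for n y
    have \<Psi>X: "\<Psi> n (X n) = u n (X n)" for n by (simp add: \<Psi>_def c_def)
    have \<psi>diff: "\<psi> (X n + h) - \<psi> (X n) = p \<bullet> h + (M+1) * (2 * ((X n - x0) \<bullet> h) + (norm h)\<^sup>2)" for n h
    proof -
      have "(norm (X n + h - x0))\<^sup>2 = (norm ((X n - x0) + h))\<^sup>2" by (simp add: algebra_simps)
      also have "\<dots> = (norm (X n - x0))\<^sup>2 + 2 * ((X n - x0) \<bullet> h) + (norm h)\<^sup>2"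
        using quad_id[of "X n - x0" h] by simp
      finally have eN: "(norm (X n + h - x0))\<^sup>2 = (norm (X n - x0))\<^sup>2 + 2 * ((X n - x0) \<bullet> h) + (norm h)\<^sup>2" .
      have e2: "p \<bullet> (X n + h - x0) = p \<bullet> (X n - x0) + p \<bullet> h"
        by (simp add: algebra_simps inner_diff_right inner_add_right)
      show ?thesis unfolding \<psi>_def e2 eN by (simp add: algebra_simps)
    qed
    have \<Psi>diff: "\<Psi> n (X n + h) - \<Psi> n (X n) - pn n \<bullet> h = (M+2) * (norm h)\<^sup>2" for n h
      using \<psi>diff[of n h] unfolding \<Psi>_def pn_def by (simp add: inner_add_left algebra_simps)
    have \<Psi>sym: "\<Psi> n (X n + h) + \<Psi> n (X n - h) - 2 * \<Psi> n (X n) = 2*(M+2)*(norm h)\<^sup>2" for n h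
      using \<Psi>diff[of n h] \<Psi>diff[of n "-h"] by (simp add: algebra_simps)
    have ule\<Psi>: "u n y \<le> \<Psi> n y" if "y \<in> cball x0 \<rho>" for n y
      using Xmax[OF that, of n] unfolding \<Psi>_def c_def by (smt (verit) zero_le_power2)
    have Wle\<Psi>: "W n y \<le> \<Psi> n y" if "y \<in> cball x0 \<rho>" for n y
      using ule\<Psi>[OF that, of n] unfolding W_def by auto
    have WX: "W n (X n) = u n (X n)" for n using tn[of n] \<Psi>X unfolding W_def by simp
    have ball_sub: "ball (X n) (tn n) \<subseteq> cball x0 \<rho>" if "n \<ge> N" for n
    proof
      fix y assume "y \<in> ball (X n) (tn n)"
      then have "dist (X n) y < \<rho>/2" using tn[of n] by auto
      moreover have "dist (X n) x0 < \<rho>/2" using N[OF that] by auto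
      moreover have "dist x0 y \<le> dist x0 (X n) + dist (X n) y" by (rule dist_triangle)
      ultimately show "y \<in> cball x0 \<rho>" by (simp add: dist_commute)
    qed
    have ge: "fraclap_ge0 s (W n) (X n) (vn n)" if n: "n \<ge> N" for n
    proof -
      have X\<Omega>: "X n \<in> \<Omega>" using X \<rho> by auto
      have C: "C11_at (\<Psi> n) (X n) (pn n)" unfolding C11_at_def
        using \<Psi>diff M by (intro exI[of _ "M+2"] exI[of _ 1]) auto
      have H: "fraclap_ge0 s (\<lambda>x. if x \<in> ball (X n) (tn n) then \<Psi> n x else u n x) (X n) (pn n /\<^sub>R norm (pn n))"
      proof (rule sub[of n, unfolded subsol_nzg_def, THEN conjunct2, rule_format, OF X\<Omega>], intro conjI)
        show "0 < tn n" by (rule tn)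
        show "C11_at (\<Psi> n) (X n) (pn n)" by (rule C)
        show "continuous_on (cball (X n) (tn n)) (\<Psi> n)"
          unfolding \<Psi>_def[abs_def] \<psi>_def by (intro continuous_intros)
        show "pn n \<noteq> 0" using N[OF n] by auto
        show "\<Psi> n (X n) = u n (X n)" by (rule \<Psi>X)
        show "\<forall>x\<in>ball (X n) (tn n) - {X n}. u n x < \<Psi> n x"
        proof
          fix x assume x: "x \<in> ball (X n) (tn n) - {X n}"
          then have "x \<in> cball x0 \<rho>" using ball_sub[OF n] by auto
          then have "u n x - \<psi> x \<le> c n" using Xmax c_def by auto
          moreover have "(norm (x - X n))\<^sup>2 > 0" using x by auto
          ultimately show "u n x < \<Psi> n x" unfolding \<Psi>_def by linarith
        qed
      qed
      have "W n = (\<lambda>x. if x \<in> ball (X n) (tn n) then \<Psi> n x else u n x)" by (rule ext) (simp add: W_def)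
      then show ?thesis using H unfolding vn_def by simp
    qed
    define G where "G \<eta> = frac_integrand s (\<lambda>x. if x \<in> ball x0 r then \<phi> x else u0 x) x0 v \<eta>" for \<eta>
    define F where "F k \<eta> = frac_integrand s (W (k+N)) (X (k+N)) (vn (k+N)) \<eta>" for k \<eta>
    define \<beta> where "\<beta> = max \<alpha> 0"
    define L where "L = (1 + norm x0 + \<rho>) / (\<rho>/2) + 1"
    define H where "H \<eta> = 2*(M+2) * \<eta> powr (1-2 * s) * indicator {0..\<rho>/2} \<eta>
        + 4*C*L powr \<beta> * \<eta> powr (\<beta>-1-2 * s) * indicator {\<rho>/2 ..} \<eta>" for \<eta>
    have res: "(\<integral>\<^sup>+ \<eta>\<in>{0<..}. ennreal (- G \<eta>) \<partial>lborel) < \<infinity> \<and>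
         (\<integral>\<^sup>+ \<eta>\<in>{0<..}. ennreal (- G \<eta>) \<partial>lborel) \<le> (\<integral>\<^sup>+ \<eta>\<in>{0<..}. ennreal (G \<eta>) \<partial>lborel)"
    proof (rule fatou_chain[of F H])
      show "F n \<in> borel_measurable borel" for n
      proof -
        have [measurable]: "u (n+N) \<in> borel_measurable borel" by (rule usc_measurable[OF uscn])
        have [measurable]: "\<Psi> (n+N) \<in> borel_measurable borel"
          unfolding \<Psi>_def[abs_def] \<psi>_def by (intro borel_measurable_continuous_onI continuous_intros)
        have [measurable]: "Measurable.pred borel (\<lambda>x. x \<in> ball (X (n + N)) (tn (n + N)))"
          unfolding pred_def by (simp add: borel_open)
        have [measurable]: "W (n+N) \<in> borel_measurable borel"
          unfolding W_def[abs_def] by measurable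
        show ?thesis unfolding F_def[abs_def] frac_integrand_def by measurable
      qed
      show "H \<in> borel_measurable borel" unfolding H_def[abs_def] by measurable
      show "(\<integral>\<^sup>+ \<eta>\<in>{0<..}. ennreal (H \<eta>) \<partial>lborel) < \<infinity>"
        unfolding H_def
        by (rule pow_int_fin) (use s \<alpha> \<rho> M in \<open>auto simp: \<beta>_def L_def\<close>)
      show "F n \<eta> \<le> H \<eta>" if \<eta>: "\<eta> > 0" for n \<eta>
      proof -
        define m where "m = n + N"
        have m: "m \<ge> N" by (simp add: m_def)
        have nv: "norm (vn m) = 1" using N[OF m] unfolding vn_def by simp
        have nh: "norm (\<eta> *\<^sub>R vn m) = \<eta>" using nv \<eta> by simp
        have dX: "dist (X m) x0 < \<rho>/2" using N[OF m] by simp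
        have q: "\<eta> powr (1 + 2 * s) > 0" using \<eta> by simp
        have Fm: "F n \<eta> = (W m (X m + \<eta> *\<^sub>R vn m) + W m (X m - \<eta> *\<^sub>R vn m) - 2 * W m (X m)) / \<eta> powr (1 + 2 * s)"
          unfolding F_def frac_integrand_def m_def by simp
        have Hnn1: "0 \<le> 2*(M+2) * \<eta> powr (1-2 * s) * indicator {0..\<rho>/2} \<eta>"
          using M by (simp add: indicator_def)
        have Hnn2: "0 \<le> 4*C*L powr \<beta> * \<eta> powr (\<beta>-1-2 * s) * indicator {\<rho>/2 ..} \<eta>"
          using \<alpha> by (simp add: indicator_def)
        have dh: "dist x0 (X m + h) \<le> dist x0 (X m) + norm h" for h
        proof -
          have "dist x0 (X m + h) \<le> dist x0 (X m) + dist (X m) (X m + h)" by (rule dist_triangle)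
          then show ?thesis by (simp add: dist_norm)
        qed
        show ?thesis
        proof (cases "\<eta> < \<rho>/2")
          case True
          have inb1: "X m + \<eta> *\<^sub>R vn m \<in> cball x0 \<rho>"
            using dh[of "\<eta> *\<^sub>R vn m"] nh dX True by (simp add: dist_commute)
          have inb2: "X m - \<eta> *\<^sub>R vn m \<in> cball x0 \<rho>"
            using dh[of "- (\<eta> *\<^sub>R vn m)"] nh dX True by (simp add: dist_commute)
          have num: "W m (X m + \<eta> *\<^sub>R vn m) + W m (X m - \<eta> *\<^sub>R vn m) - 2 * W m (X m) \<le> 2*(M+2)*\<eta>\<^sup>2"
            using Wle\<Psi>[OF inb1, of m] Wle\<Psi>[OF inb2, of m] WX[of m] \<Psi>X[of m] \<Psi>sym[of m "\<eta> *\<^sub>R vn m"] nh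
            by simp
          have "F n \<eta> \<le> 2*(M+2)*\<eta>\<^sup>2 / \<eta> powr (1 + 2 * s)"
            unfolding Fm using num q by (simp add: divide_right_mono)
          also have "\<eta>\<^sup>2 = \<eta> powr 2" using powr_realpow[OF \<eta>, of 2] by simp
          also have "2*(M+2)*\<eta> powr 2 / \<eta> powr (1 + 2 * s) = 2*(M+2) * \<eta> powr (1 - 2 * s)"
            using powr_diff[of \<eta> 2 "1 + 2 * s"] by (simp add: algebra_simps)
          also have "\<dots> = 2*(M+2) * \<eta> powr (1-2 * s) * indicator {0..\<rho>/2} \<eta>"
            using True \<eta> by (simp add: indicator_def)
          also have "\<dots> \<le> H \<eta>" unfolding H_def using Hnn2 by linarith
          finally show ?thesis .
        next
          case False
          have tn\<eta>: "tn m \<le> \<eta>" using tn(2)[of m] False by simp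
          have out1: "X m + \<eta> *\<^sub>R vn m \<notin> ball (X m) (tn m)"
            using tn\<eta> nh by (simp add: dist_norm)
          have out2: "X m - \<eta> *\<^sub>R vn m \<notin> ball (X m) (tn m)"
            using tn\<eta> nh by (simp add: dist_norm)
          have W1: "W m (X m + \<eta> *\<^sub>R vn m) = u m (X m + \<eta> *\<^sub>R vn m)" using out1 by (simp add: W_def)
          have W2: "W m (X m - \<eta> *\<^sub>R vn m) = u m (X m - \<eta> *\<^sub>R vn m)" using out2 by (simp add: W_def)
          have Lge: "1 + norm x0 + \<rho> + \<eta> \<le> L * \<eta>"
          proof -
            have "1 \<le> \<eta> / (\<rho>/2)" using False \<rho> by simp
            then have "(1 + norm x0 + \<rho>) * 1 \<le> (1 + norm x0 + \<rho>) * (\<eta> / (\<rho>/2))"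
              using \<rho> by (intro mult_left_mono) auto
            then show ?thesis unfolding L_def by (simp add: algebra_simps)
          qed
          have L0: "L \<ge> 0" unfolding L_def using \<rho> by simp
          have bnd: "\<bar>u m y\<bar> \<le> C * L powr \<beta> * \<eta> powr \<beta>" if y: "norm y \<le> norm x0 + \<rho> + \<eta>" for y
          proof -
            have "(1 + norm y) powr \<alpha> \<le> (1 + norm y) powr \<beta>"
              by (rule powr_mono) (auto simp: \<beta>_def)
            also have "\<dots> \<le> (L * \<eta>) powr \<beta>"
              by (rule powr_mono2) (use y Lge in \<open>auto simp: \<beta>_def\<close>)
            also have "\<dots> = L powr \<beta> * \<eta> powr \<beta>"
              using L0 \<eta> by (simp add: powr_mult)
            finally have "C * (1 + norm y) powr \<alpha> \<le> C * (L powr \<beta> * \<eta> powr \<beta>)"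
              using \<alpha>(2) by (intro mult_left_mono) auto
            then show ?thesis using \<alpha>(3)[of m y] by simp
          qed
          have nX: "norm (X m) \<le> norm x0 + \<rho>/2"
            using dX norm_triangle_ineq2[of "X m" x0] by (simp add: dist_norm)
          have n1: "norm (X m + \<eta> *\<^sub>R vn m) \<le> norm x0 + \<rho> + \<eta>"
            using norm_triangle_ineq[of "X m" "\<eta> *\<^sub>R vn m"] nh nX \<rho> by linarith
          have n2: "norm (X m - \<eta> *\<^sub>R vn m) \<le> norm x0 + \<rho> + \<eta>"
            using norm_triangle_ineq4[of "X m" "\<eta> *\<^sub>R vn m"] nh nX \<rho> by linarith
          have n3: "norm (X m) \<le> norm x0 + \<rho> + \<eta>" using nX \<rho> \<eta> by linarith
          have num: "W m (X m + \<eta> *\<^sub>R vn m) + W m (X m - \<eta> *\<^sub>R vn m) - 2 * W m (X m) \<le> 4*C*L powr \<beta> * \<eta> powr \<beta>"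
            using bnd[OF n1] bnd[OF n2] bnd[OF n3] unfolding W1 W2 WX by (simp add: abs_le_iff)
          have "F n \<eta> \<le> 4*C*L powr \<beta> * \<eta> powr \<beta> / \<eta> powr (1 + 2 * s)"
            unfolding Fm using num q by (simp add: divide_right_mono)
          also have "\<dots> = 4*C*L powr \<beta> * \<eta> powr (\<beta>-1-2 * s)"
            using powr_diff[of \<eta> \<beta> "1 + 2 * s"] by (simp add: algebra_simps)
          also have "\<dots> = 4*C*L powr \<beta> * \<eta> powr (\<beta>-1-2 * s) * indicator {\<rho>/2 ..} \<eta>"
            using False by (simp add: indicator_def)
          also have "\<dots> \<le> H \<eta>" unfolding H_def using Hnn1 by linarith
          finally show ?thesis .
        qed
      qed
      show "\<forall>\<^sub>F n in sequentially. F n \<eta> < G \<eta> + e" if \<eta>: "\<eta> > 0" and e: "e > 0" for \<eta> e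
      proof -
        define q where "q = \<eta> powr (1 + 2 * s)"
        have q: "q > 0" using \<eta> by (simp add: q_def)
        define e' where "e' = e * q / 6"
        have e': "e' > 0" using e q by (simp add: e'_def)
        have Xs: "(\<lambda>k. X (k+N)) \<longlonglongrightarrow> x0" by (rule LIMSEQ_ignore_initial_segment[OF Xlim])
        have vs: "(\<lambda>k. vn (k+N)) \<longlonglongrightarrow> v" by (rule LIMSEQ_ignore_initial_segment[OF vnlim])
        have Yp: "(\<lambda>k. X (k+N) + \<eta> *\<^sub>R vn (k+N)) \<longlonglongrightarrow> x0 + \<eta> *\<^sub>R v" by (intro tendsto_intros Xs vs)
        have Ym: "(\<lambda>k. X (k+N) - \<eta> *\<^sub>R vn (k+N)) \<longlonglongrightarrow> x0 - \<eta> *\<^sub>R v" by (intro tendsto_intros Xs vs)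
        have E1: "\<forall>\<^sub>F k in sequentially. u0 (X (k+N) + \<eta> *\<^sub>R vn (k+N)) < u0 (x0 + \<eta> *\<^sub>R v) + e'"
          by (rule usc_seq[OF usc0 Yp e'])
        have E2: "\<forall>\<^sub>F k in sequentially. u0 (X (k+N) - \<eta> *\<^sub>R vn (k+N)) < u0 (x0 - \<eta> *\<^sub>R v) + e'"
          by (rule usc_seq[OF usc0 Ym e'])
        have E3: "\<forall>\<^sub>F k in sequentially. \<forall>y. \<bar>u (k+N) y - u0 y\<bar> < e'"
          using eventually_sequentially_seg[of "\<lambda>n. \<forall>y. \<bar>u n y - u0 y\<bar> < e'" N] unif[OF e'] by simp
        have E4: "\<forall>\<^sub>F k in sequentially. u (k+N) (X (k+N)) > u0 x0 - e'"
          using eventually_sequentially_seg[of "\<lambda>n. u n (X n) > u0 x0 - e'" N] uX[OF e'] by simp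
        obtain m0 where m0: "inverse (real (Suc m0)) < \<eta>" using reals_Archimedean[OF \<eta>] by blast
        have E5: "\<forall>\<^sub>F k in sequentially. tn (k+N) < \<eta>"
          unfolding eventually_sequentially
        proof (intro exI[of _ m0] allI impI)
          fix k assume "m0 \<le> k"
          then have "1 / real (Suc (k+N)) \<le> 1 / real (Suc m0)"
            by (intro divide_left_mono) auto
          then show "tn (k+N) < \<eta>" using m0 unfolding tn_def by (simp add: inverse_eq_divide)
        qed
        define ut where "ut = (\<lambda>x. if x \<in> ball x0 r then \<phi> x else u0 x)"
        have utge: "ut a \<ge> u0 a" for a
        proof (cases "a \<in> ball x0 r")
          case True
          then show ?thesis
          proof (cases "a = x0")
            case True then show ?thesis using phix0 by (simp add: ut_def)
          next
            case False then show ?thesis using phigt \<open>a \<in> ball x0 r\<close> by (force simp: ut_def)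
          qed
        next
          case False then show ?thesis by (simp add: ut_def)
        qed
        have utx0: "ut x0 = u0 x0" using r phix0 by (simp add: ut_def)
        have Gq: "G \<eta> = (ut (x0 + \<eta> *\<^sub>R v) + ut (x0 - \<eta> *\<^sub>R v) - 2 * ut x0) / q"
          unfolding G_def frac_integrand_def q_def ut_def by simp
        from E1 E2 E3 E4 E5 show ?thesis
        proof eventually_elim
          case (elim k)
          define n where "n = k + N"
          have n: "n \<ge> N" by (simp add: n_def)
          have nv: "norm (vn n) = 1" using N[OF n] unfolding vn_def by simp
          have nh: "norm (\<eta> *\<^sub>R vn n) = \<eta>" using nv \<eta> by simp
          have tnl: "tn n < \<eta>" using elim(5) by (simp add: n_def)
          have W1: "W n (X n + \<eta> *\<^sub>R vn n) = u n (X n + \<eta> *\<^sub>R vn n)"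
            using tnl nh by (simp add: W_def dist_norm)
          have W2: "W n (X n - \<eta> *\<^sub>R vn n) = u n (X n - \<eta> *\<^sub>R vn n)"
            using tnl nh by (simp add: W_def dist_norm)
          have Fq: "F k \<eta> = (W n (X n + \<eta> *\<^sub>R vn n) + W n (X n - \<eta> *\<^sub>R vn n) - 2 * W n (X n)) / q"
            unfolding F_def frac_integrand_def q_def n_def by simp
          have a1: "u n (X n + \<eta> *\<^sub>R vn n) < u0 (x0 + \<eta> *\<^sub>R v) + 2 * e'"
            using elim(1) elim(3)[rule_format, of "X n + \<eta> *\<^sub>R vn n"] unfolding n_def by linarith
          have a2: "u n (X n - \<eta> *\<^sub>R vn n) < u0 (x0 - \<eta> *\<^sub>R v) + 2 * e'"
            using elim(2) elim(3)[rule_format, of "X n - \<eta> *\<^sub>R vn n"] unfolding n_def by linarith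
          have a3: "u n (X n) > u0 x0 - e'" using elim(4) unfolding n_def by simp
          have "W n (X n + \<eta> *\<^sub>R vn n) + W n (X n - \<eta> *\<^sub>R vn n) - 2 * W n (X n)
              < (ut (x0 + \<eta> *\<^sub>R v) + ut (x0 - \<eta> *\<^sub>R v) - 2 * ut x0) + e * q"
            unfolding W1 W2 WX utx0 using a1 a2 a3 utge[of "x0 + \<eta> *\<^sub>R v"] utge[of "x0 - \<eta> *\<^sub>R v"]
            unfolding e'_def by linarith
          then show ?case unfolding Fq Gq using q by (intro div_lt)
        qed
      qed
      show "(\<integral>\<^sup>+ \<eta>\<in>{0<..}. ennreal (- F n \<eta>) \<partial>lborel) \<le> (\<integral>\<^sup>+ \<eta>\<in>{0<..}. ennreal (F n \<eta>) \<partial>lborel)" for n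
        using ge[of "n+N"] unfolding F_def fraclap_ge0_def fraclap_neg_def fraclap_pos_def by simp
    qed
    then show "fraclap_ge0 s (\<lambda>x. if x \<in> ball x0 r then \<phi> x else u0 x) x0 (p /\<^sub>R norm p)"
      unfolding fraclap_ge0_def fraclap_neg_def fraclap_pos_def G_def v_def by simp
  qed
qed


theorem theorem3p10:
  fixes s :: real and \<Omega> :: "'a::euclidean_space set"
    and u :: "nat \<Rightarrow> 'a \<Rightarrow> real" and u0 :: "'a \<Rightarrow> real"
  assumes "1/2 < s" and "s < 1"
    and "open \<Omega>"
    and "uniform_limit UNIV u u0 sequentially"
    and "\<exists>\<alpha> C. \<alpha> < 2 * s \<and> C > 0 \<and> (\<forall>n x. \<bar>u n x\<bar> \<le> C * (1 + norm x) powr \<alpha>)"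
  shows "((\<forall>n. subsol_nzg s \<Omega> (u n)) \<longrightarrow> subsol_nzg s \<Omega> u0) \<and>
         ((\<forall>n. supersol_nzg s \<Omega> (u n)) \<longrightarrow> supersol_nzg s \<Omega> u0)"
proof -
  obtain \<alpha> C where al: "\<alpha> < 2 * s" "C > 0" "\<And>n x. \<bar>u n x\<bar> \<le> C * (1 + norm x) powr \<alpha>"
    using assms(5) by blast
  have A: "(\<forall>n. subsol_nzg s \<Omega> (u n)) \<longrightarrow> subsol_nzg s \<Omega> u0"
    using sub_main[OF assms(1-4) al] by blast
  have ul': "uniform_limit UNIV (\<lambda>n x. - u n x) (\<lambda>x. - u0 x) sequentially"
    using uniform_limit_uminus[OF assms(4)] by simp
  have al': "\<bar>- u n x\<bar> \<le> C * (1 + norm x) powr \<alpha>" for n x using al(3)[of n x] by simp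
  have B: "(\<forall>n. supersol_nzg s \<Omega> (u n)) \<longrightarrow> supersol_nzg s \<Omega> u0"
    unfolding super_iff
    using sub_main[OF assms(1-3) ul' al(1,2) al'] by blast
  show ?thesis using A B by blast
qed

end
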